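(* Let $\alpha:X\to\mathbb PLX$ be measurable, let $t_a(x)\in\mathbb DX$ be $t_a(x)(S)=\alpha(x)(\{a\}\times S)$, and let $[\![-]\!]:\mathbb DX\to\mathbb DA^\infty$ be the unique $F$-coalgebra morphism from $\tilde\alpha^\#$ to $\Pi$ (with $\tilde\alpha^\#$ as below). Let $\mathbf{tr}:X\to\mathbb PA^\infty$ be any map such that for all $x\in X$, $a\in A$, $w\in A^*$: $$\mathbf{tr}(x)(A^\infty)=\alpha(x)(LX),\quad \mathbf{tr}(x)(\{\varepsilon\})=\alpha(x)(1),$$ $$\mathbf{tr}(x)(awA^\infty)=\int_X\mathbf{tr}(-)(wA^\infty)\,dt_a(x),\quad \mathbf{tr}(x)(\{aw\})=\int_X\mathbf{tr}(-)(\{w\})\,dt_a(x).$$ Then $[\![\eta_X(x)]\!]=\mathbf{tr}(x)$ for every $x\in X$, i.e. $\iota_{A^\infty}\circ\mathbf{tr}=[\![-]\!]\circ\eta_X$.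
   Context: Work in $\mathbf{Meas}$. $\mathbb I=[0,1]$; $A$ finite alphabet; $1=\{*\}$; $LX=A\times X+1$ with $\sigma$-algebra $(\mathcal P(A)\otimes\Sigma_X)\oplus\mathcal P(1)$. $\mathbb DX$ (resp. $\mathbb PX$) is the set of sub-probability (resp. probability) measures on $X$ with the $\sigma$-algebra generated by $m\mapsto m(S)$; $\iota_X:\mathbb PX\to\mathbb DX$ is the inclusion; $\eta_X(x)$ is the Dirac measure at $x$. $A^\infty=A^*\cup A^\omega$ with $\sigma$-algebra generated by $\{\emptyset\}\cup\{\{w\}\mid w\in A^*\}\cup\{wA^\infty\mid w\in A^*\}$. $F$ is the functor $FX=\mathbb I\times\mathbb I\times X^A$, $Ff=\mathrm{id}\times\mathrm{id}\times f^A$. $\Pi(m)=\langle m(A^\infty),m(\{\varepsilon\}),a\mapsto m_a\rangle$ with $m_a(S)=m(aS)$. The determinized coalgebra $\tilde\alpha^\#=\langle\tilde\alpha^\#_1,\tilde\alpha^\#_*,a\mapsto\tau_a\rangle:\mathbb DX\to F\mathbb DX$ is $\tilde\alpha^\#_1(m)=\int_X\alpha(-)(LX)\,dm$, $\tilde\alpha^\#_*(m)=\int_X\alpha(-)(1)\,dm$, $\tau_a(m)(S)=\int_X\alpha(-)(\{a\}\times S)\,dm$; it satisfies $\tilde\alpha^\#_1=\tilde\alpha^\#_*+\sum_a\tilde\alpha^\#_1\circ\tau_a$, which guarantees existence and uniqueness of a measurable $[\![-]\!]$ with $\Pi\circ[\![-]\!]=F[\![-]\!]\circ\tilde\alpha^\#$.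 *)

theory Defs
  imports "HOL-Probability.Probability"
begin

text \<open>Elements of LX are Inl (a, x) (for a in A, x in X) or Inr () (the point of 1).
  The sigma-algebra is the coproduct sigma-algebra (P(A) (x) Sigma_X) (+) P(1).\<close>

definition L_space :: "'x measure \<Rightarrow> ('a \<times> 'x + unit) set" where
  "L_space M = Inl ` (UNIV \<times> space M) \<union> {Inr ()}"

definition L :: "'x measure \<Rightarrow> ('a \<times> 'x + unit) measure" where
  "L M = sigma (L_space M)
     ({Inl ` S \<union> T | S T. S \<in> sets (count_space (UNIV :: 'a set) \<Otimes>\<^sub>M M) \<and> T \<subseteq> {Inr ()}})"

text \<open>Inl w is the finite word w, Inr f the infinite word f 0, f 1, ...\<close>

type_synonym 'a word = "'a list + (nat \<Rightarrow> 'a)"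

definition eps :: "'a word" where
  "eps = Inl []"

definition wcons :: "'a \<Rightarrow> 'a word \<Rightarrow> 'a word" where
  "wcons a u = (case u of Inl w \<Rightarrow> Inl (a # w) | Inr f \<Rightarrow> Inr (case_nat a f))"

definition cyl :: "'a list \<Rightarrow> 'a word set" where
  "cyl w = {Inl v | v. \<exists>z. v = w @ z} \<union> {Inr f | f. map f [0..<length w] = w}"

definition Ainf :: "'a word measure" where
  "Ainf = sigma UNIV ({{}} \<union> {{Inl w} | w. True} \<union> {cyl w | w. True})"

definition Fmap :: "('b \<Rightarrow> 'c) \<Rightarrow> real \<times> real \<times> ('a \<Rightarrow> 'b) \<Rightarrow> real \<times> real \<times> ('a \<Rightarrow> 'c)" where
  "Fmap f = (\<lambda>(p, q, g). (p, q, f \<circ> g))"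

definition derivm :: "'a \<Rightarrow> 'a word measure \<Rightarrow> 'a word measure" where
  "derivm a m = measure_of (space Ainf) (sets Ainf) (\<lambda>S. emeasure m (wcons a ` S))"

definition Pi_coalg :: "'a word measure \<Rightarrow> real \<times> real \<times> ('a \<Rightarrow> 'a word measure)" where
  "Pi_coalg m = (measure m (space Ainf), measure m {eps}, \<lambda>a. derivm a m)"

definition t_a :: "'x measure \<Rightarrow> ('x \<Rightarrow> ('a \<times> 'x + unit) measure) \<Rightarrow> 'a \<Rightarrow> 'x \<Rightarrow> 'x measure" where
  "t_a M \<alpha> a x = measure_of (space M) (sets M) (\<lambda>S. emeasure (\<alpha> x) (Inl ` ({a} \<times> S)))"

definition tau :: "'x measure \<Rightarrow> ('x \<Rightarrow> ('a \<times> 'x + unit) measure) \<Rightarrow> 'a \<Rightarrow> 'x measure \<Rightarrow> 'x measure" where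
  "tau M \<alpha> a m = measure_of (space M) (sets M)
     (\<lambda>S. \<integral>\<^sup>+ x. emeasure (\<alpha> x) (Inl ` ({a} \<times> S)) \<partial>m)"

definition alpha_sharp :: "'x measure \<Rightarrow> ('x \<Rightarrow> ('a \<times> 'x + unit) measure) \<Rightarrow> 'x measure
    \<Rightarrow> real \<times> real \<times> ('a \<Rightarrow> 'x measure)" where
  "alpha_sharp M \<alpha> m =
     ((\<integral>x. measure (\<alpha> x) (space (L M)) \<partial>m),
      (\<integral>x. measure (\<alpha> x) {Inr ()} \<partial>m),
      (\<lambda>a. tau M \<alpha> a m))"

definition is_coalg_morphism :: "'x measure \<Rightarrow> ('x \<Rightarrow> ('a \<times> 'x + unit) measure)
    \<Rightarrow> ('x measure \<Rightarrow> 'a word measure) \<Rightarrow> bool" where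
  "is_coalg_morphism M \<alpha> h \<longleftrightarrow>
     h \<in> measurable (subprob_algebra M) (subprob_algebra Ainf) \<and>
     (\<forall>m \<in> space (subprob_algebra M). Pi_coalg (h m) = Fmap h (alpha_sharp M \<alpha> m))"

end

theory Submission
  imports Defs
begin


lemma emeasure_measure_of_image:
  assumes sa: "sigma_algebra \<Omega> A" and inj: "inj f"
    and img: "\<And>S. S \<in> A \<Longrightarrow> f ` S \<in> sets N" and S: "S \<in> A"
  shows "emeasure (measure_of \<Omega> A (\<lambda>S. emeasure N (f ` S))) S = emeasure N (f ` S)"
proof (rule emeasure_measure_of_sigma[OF sa _ _ S])
  show "positive A (\<lambda>S. emeasure N (f ` S))" by (simp add: positive_def)
  show "countably_additive A (\<lambda>S. emeasure N (f ` S))"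
    unfolding countably_additive_def
  proof safe
    fix F :: "nat \<Rightarrow> _" assume F: "range F \<subseteq> A" "disjoint_family F" "\<Union>(range F) \<in> A"
    have "disjoint_family (\<lambda>i. f ` F i)"
      using F(2) unfolding disjoint_family_on_def by (simp add: image_Int[OF inj, symmetric])
    moreover have "range (\<lambda>i. f ` F i) \<subseteq> sets N" using F(1) img by auto
    ultimately have "(\<Sum>i. emeasure N (f ` F i)) = emeasure N (\<Union>i. f ` F i)"
      by (rule suminf_emeasure[rotated])
    then show "(\<Sum>i. emeasure N (f ` F i)) = emeasure N (f ` \<Union>(range F))"
      by (simp add: image_UN)
  qed
qed

lemma sets_Ainf: "sets Ainf = sigma_sets UNIV ({{}} \<union> {{Inl w} | w. True} \<union> {cyl w | w. True})"
  unfolding Ainf_def by (rule sets_measure_of) auto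

lemma space_Ainf[simp]: "space Ainf = UNIV"
  unfolding Ainf_def by (rule space_measure_of) auto

lemma cyl_sets[measurable]: "cyl w \<in> sets Ainf" and sing_sets[measurable]: "{Inl w} \<in> sets Ainf"
  unfolding sets_Ainf by auto

lemma inj_wcons: "inj (wcons a)"
proof (rule injI)
  fix u v assume "wcons a u = wcons a v"
  then show "u = v"
  proof (cases u; cases v)
    fix f g assume "u = Inr f" "v = Inr g"
    with \<open>wcons a u = wcons a v\<close> have e: "case_nat a f = case_nat a g" by (simp add: wcons_def)
    have "f i = g i" for i using fun_cong[OF e, of "Suc i"] by simp
    then show ?thesis using \<open>u = Inr f\<close> \<open>v = Inr g\<close> by auto
  qed (use \<open>wcons a u = wcons a v\<close> in \<open>auto simp: wcons_def\<close>)
qed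

lemma cyl_Nil: "cyl [] = UNIV"
proof (intro set_eqI iffI)
  fix x :: "'a word" show "x \<in> cyl []" unfolding cyl_def by (cases x) auto
qed simp

lemma wcons_cyl: "wcons a ` cyl w = cyl (a # w)"
proof
  show "wcons a ` cyl w \<subseteq> cyl (a # w)"
    unfolding cyl_def wcons_def by (auto simp: map_upt_Suc simp del: upt_Suc)
  show "cyl (a # w) \<subseteq> wcons a ` cyl w"
  proof
    fix u assume u: "u \<in> cyl (a # w)"
    show "u \<in> wcons a ` cyl w"
    proof (cases u)
      case (Inl v)
      then obtain z where "v = a # w @ z" using u unfolding cyl_def by auto
      then have "u = wcons a (Inl (w @ z))" using Inl by (simp add: wcons_def)
      moreover have "Inl (w @ z) \<in> cyl w" unfolding cyl_def by auto
      ultimately show ?thesis by blast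
    next
      case (Inr g)
      then have g: "map g [0..<Suc (length w)] = a # w" using u unfolding cyl_def by auto
      then have g0: "g 0 = a" and gs: "map (\<lambda>i. g (Suc i)) [0..<length w] = w"
        by (simp_all add: map_upt_Suc del: upt_Suc)
      have "g = case_nat a (\<lambda>i. g (Suc i))" using g0 by (auto split: nat.split)
      then have "u = wcons a (Inr (\<lambda>i. g (Suc i)))" using Inr by (simp add: wcons_def)
      moreover have "Inr (\<lambda>i. g (Suc i)) \<in> cyl w" using gs unfolding cyl_def by auto
      ultimately show ?thesis by blast
    qed
  qed
qed

lemma wcons_sing: "wcons a ` {Inl w} = {Inl (a # w)}"
  by (simp add: wcons_def)

lemma wcons_UNIV: "wcons a ` UNIV = cyl [a]"
  using wcons_cyl[of a "[]"] by (simp add: cyl_Nil)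

lemma wcons_sets: "S \<in> sets Ainf \<Longrightarrow> wcons a ` S \<in> sets Ainf"
proof -
  assume "S \<in> sets Ainf"
  then have "S \<in> sigma_sets UNIV ({{}} \<union> {{Inl w} | w. True} \<union> {cyl w | w. True})"
    by (simp add: sets_Ainf)
  then show ?thesis
  proof induct
    case (Basic S)
    then consider "S = {}" | w where "S = {Inl w}" | w where "S = cyl w" by blast
    then show ?case
    proof cases
      case 1 then show ?thesis by simp
    next
      case (2 w) then show ?thesis by (simp add: wcons_def)
    next
      case (3 w) then show ?thesis by (simp add: wcons_cyl)
    qed
  next
    case Empty then show ?case by simp
  next
    case (Compl S)
    have "wcons a ` (UNIV - S) = cyl [a] - wcons a ` S"
      using inj_wcons[of a] by (simp add: image_set_diff wcons_UNIV)
    then show ?case using Compl by auto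
  next
    case (Union F) then show ?case by (auto simp: image_UN)
  qed
qed

lemma cyl_Int:
  assumes "length v \<le> length w"
  shows "cyl v \<inter> cyl w = (if take (length v) w = v then cyl w else {})"
proof (cases "take (length v) w = v")
  case True
  have "cyl w \<subseteq> cyl v"
  proof
    fix u assume "u \<in> cyl w"
    then show "u \<in> cyl v"
    proof (cases u)
      case (Inl x)
      then obtain z where "x = w @ z" using \<open>u \<in> cyl w\<close> unfolding cyl_def by auto
      then have "x = v @ (drop (length v) w @ z)" using True
        by (metis append.assoc append_take_drop_id)
      then show ?thesis using Inl unfolding cyl_def by auto
    next
      case (Inr f)
      then have "map f [0..<length w] = w" using \<open>u \<in> cyl w\<close> unfolding cyl_def by auto
      then have "take (length v) (map f [0..<length w]) = v" using True by simp
      then have "map f [0..<length v] = v" using assms by (simp add: take_map take_upt)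
      then show ?thesis using Inr unfolding cyl_def by auto
    qed
  qed
  then show ?thesis using True by auto
next
  case False
  have "u \<notin> cyl v" if "u \<in> cyl w" for u
  proof (cases u)
    case (Inl x)
    then obtain z where "x = w @ z" using \<open>u \<in> cyl w\<close> unfolding cyl_def by auto
    then have "take (length v) x = take (length v) w" using assms by simp
    then show ?thesis using Inl False unfolding cyl_def by auto
  next
    case (Inr f)
    then have "map f [0..<length w] = w" using \<open>u \<in> cyl w\<close> unfolding cyl_def by auto
    then have "take (length v) w = map f [0..<length v]" using assms
      by (metis add_0 take_map take_upt)
    then show ?thesis using Inr False unfolding cyl_def by auto
  qed
  then show ?thesis using False by auto
qed

abbreviation "GenE \<equiv> ({{}} \<union> {{Inl w} | w. True} \<union> {cyl w | w. True}) :: 'a word set set"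

lemma cyl_Int_E: "cyl v \<inter> cyl w \<in> GenE"
proof (cases "length v \<le> length w")
  case True then show ?thesis by (simp add: cyl_Int) blast
next
  case False then have "length w \<le> length v" by simp
  then have "cyl w \<inter> cyl v = (if take (length w) v = w then cyl v else {})" by (rule cyl_Int)
  then have "cyl v \<inter> cyl w = (if take (length w) v = w then cyl v else {})" by (simp add: Int_commute)
  then show ?thesis by auto
qed

lemma GenE_iff: "X \<in> GenE \<longleftrightarrow> X = {} \<or> (\<exists>u. X = {Inl u}) \<or> (\<exists>w. X = cyl w)"
  by (simp only: Un_iff mem_Collect_eq singleton_iff) blast

lemma Int_stable_E: "Int_stable GenE"
proof (rule Int_stableI)
  fix a b :: "'a word set" assume a: "a \<in> GenE" and b: "b \<in> GenE"
  have sing: "{Inl u} \<inter> X \<in> GenE" "X \<inter> {Inl u} \<in> GenE" for u and X :: "'a word set"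
  proof -
    have "{Inl u} \<inter> X = {} \<or> {Inl u} \<inter> X = {Inl u}" by auto
    then show "{Inl u} \<inter> X \<in> GenE" unfolding GenE_iff by blast
    then show "X \<inter> {Inl u} \<in> GenE" by (simp add: Int_commute)
  qed
  from a consider "a = {}" | u where "a = {Inl u}" | v where "a = cyl v" unfolding GenE_iff by blast
  then show "a \<inter> b \<in> GenE"
  proof cases
    case 1 then show ?thesis by (simp add: GenE_iff)
  next
    case (2 u) then show ?thesis using sing by simp
  next
    case (3 v)
    from b consider "b = {}" | u where "b = {Inl u}" | w where "b = cyl w" unfolding GenE_iff by blast
    then show ?thesis
    proof cases
      case 1 then show ?thesis by (simp add: GenE_iff)
    next
      case (2 u) then show ?thesis using sing by simp
    next
      case (3 w) then show ?thesis using \<open>a = cyl v\<close> cyl_Int_E by simp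
    qed
  qed
qed




lemma L_sets_gen:
  "{Inl ` S \<union> T | S T. S \<in> sets (count_space (UNIV :: 'a set) \<Otimes>\<^sub>M M) \<and> T \<subseteq> {Inr ()}}
     \<subseteq> Pow (L_space M)"
proof
  fix X assume "X \<in> {Inl ` S \<union> T | S T. S \<in> sets (count_space (UNIV :: 'a set) \<Otimes>\<^sub>M M) \<and> T \<subseteq> {Inr ()}}"
  then obtain S T where X: "X = Inl ` S \<union> T" and S: "S \<in> sets (count_space (UNIV :: 'a set) \<Otimes>\<^sub>M M)"
    and T: "T \<subseteq> {Inr ()}" by blast
  have "S \<subseteq> UNIV \<times> space M" using sets.sets_into_space[OF S] by (simp add: space_pair_measure)
  then show "X \<in> Pow (L_space M)" using X T unfolding L_space_def by auto
qed

lemma sets_L: "sets (L M :: ('a \<times> 'x + unit) measure) = sigma_sets (L_space M)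
     {Inl ` S \<union> T | S T. S \<in> sets (count_space (UNIV :: 'a set) \<Otimes>\<^sub>M M) \<and> T \<subseteq> {Inr ()}}"
  unfolding L_def by (rule sets_measure_of[OF L_sets_gen])

lemma L_Inl_sets: "S \<in> sets M \<Longrightarrow> Inl ` ({a} \<times> S) \<in> sets (L M :: ('a \<times> 'x + unit) measure)"
proof -
  assume S: "S \<in> sets M"
  have "{a} \<times> S \<in> sets (count_space (UNIV :: 'a set) \<Otimes>\<^sub>M M)" using S by (intro pair_measureI) auto
  then have "Inl ` ({a} \<times> S) \<union> {} \<in> {Inl ` S \<union> T | S T. S \<in> sets (count_space (UNIV :: 'a set) \<Otimes>\<^sub>M M) \<and> T \<subseteq> {Inr ()}}"
    by blast
  then show ?thesis unfolding sets_L by auto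
qed

lemma L_Inr_sets: "{Inr ()} \<in> sets (L M :: ('a \<times> 'x + unit) measure)"
proof -
  have "{} \<in> sets (count_space (UNIV :: 'a set) \<Otimes>\<^sub>M M)" by simp
  then have "Inl ` {} \<union> {Inr ()} \<in> {Inl ` S \<union> T | S T. S \<in> sets (count_space (UNIV :: 'a set) \<Otimes>\<^sub>M M) \<and> T \<subseteq> {Inr ()}}"
    by blast
  then show ?thesis unfolding sets_L by auto
qed

lemma Inl_img: "Inl ` ({a} \<times> S) = (\<lambda>y. Inl (a, y)) ` S" by auto

context
  fixes M :: "'x measure"
    and \<alpha> :: "'x \<Rightarrow> ('a::finite \<times> 'x + unit) measure"
    and sem :: "'x measure \<Rightarrow> 'a word measure"
    and tr :: "'x \<Rightarrow> 'a word measure"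
  assumes alpha_meas: "\<alpha> \<in> measurable M (prob_algebra (L M))"
    and sem_morph: "is_coalg_morphism M \<alpha> sem"
    and tr_prob: "\<And>x. x \<in> space M \<Longrightarrow> tr x \<in> space (prob_algebra Ainf)"
    and tr_total: "\<And>x. x \<in> space M \<Longrightarrow> emeasure (tr x) (space Ainf) = emeasure (\<alpha> x) (space (L M))"
    and tr_eps: "\<And>x. x \<in> space M \<Longrightarrow> emeasure (tr x) {eps} = emeasure (\<alpha> x) {Inr ()}"
    and tr_cyl: "\<And>x a w. x \<in> space M \<Longrightarrow>
       emeasure (tr x) (cyl (a # w)) = (\<integral>\<^sup>+ y. emeasure (tr y) (cyl w) \<partial>(t_a M \<alpha> a x))"
    and tr_fin: "\<And>x a w. x \<in> space M \<Longrightarrow>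
       emeasure (tr x) {Inl (a # w)} = (\<integral>\<^sup>+ y. emeasure (tr y) {Inl w} \<partial>(t_a M \<alpha> a x))"
    and nonempty: "space M \<noteq> {}"
begin

lemma alpha_x: "x \<in> space M \<Longrightarrow> prob_space (\<alpha> x) \<and> sets (\<alpha> x) = sets (L M)"
  using measurable_space[OF alpha_meas] by (auto simp: space_prob_algebra)

lemma alpha_sub: "\<alpha> \<in> measurable M (subprob_algebra (L M))"
  by (rule measurable_prob_algebraD[OF alpha_meas])

lemma alpha_emeas: "X \<in> sets (L M) \<Longrightarrow> (\<lambda>x. emeasure (\<alpha> x) X) \<in> borel_measurable M"
  by (rule measurable_compose[OF alpha_sub measurable_emeasure_subprob_algebra])

lemma alpha_meas_real: "X \<in> sets (L M) \<Longrightarrow> (\<lambda>x. measure (\<alpha> x) X) \<in> borel_measurable M"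
  by (rule measurable_compose[OF alpha_sub measurable_measure_subprob_algebra])

lemma sets_t_a: "sets (t_a M \<alpha> a x) = sets M"
  unfolding t_a_def by (rule sets.sets_measure_of_eq)

lemma space_t_a: "space (t_a M \<alpha> a x) = space M"
  by (rule sets_eq_imp_space_eq[OF sets_t_a])

lemma emeasure_t_a: "x \<in> space M \<Longrightarrow> S \<in> sets M \<Longrightarrow>
    emeasure (t_a M \<alpha> a x) S = emeasure (\<alpha> x) (Inl ` ({a} \<times> S))"
  unfolding t_a_def Inl_img
  by (rule emeasure_measure_of_image[OF sets.sigma_algebra_axioms])
     (auto simp: inj_def alpha_x L_Inl_sets[unfolded Inl_img])

lemma t_a_meas: "t_a M \<alpha> a \<in> measurable M (subprob_algebra M)"
proof (rule measurable_subprob_algebra)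
  fix x assume x: "x \<in> space M"
  interpret prob_space "\<alpha> x" using alpha_x[OF x] by simp
  have "emeasure (t_a M \<alpha> a x) (space (t_a M \<alpha> a x)) \<le> 1"
    using emeasure_t_a[OF x sets.top] by (simp add: space_t_a emeasure_le_1)
  then show "subprob_space (t_a M \<alpha> a x)"
    by (rule subprob_spaceI) (simp add: space_t_a nonempty)
next
  fix x show "sets (t_a M \<alpha> a x) = sets M" by (rule sets_t_a)
next
  fix S assume S: "S \<in> sets M"
  have "(\<lambda>x. emeasure (\<alpha> x) (Inl ` ({a} \<times> S))) \<in> borel_measurable M"
    by (rule alpha_emeas[OF L_Inl_sets[OF S]])
  then show "(\<lambda>x. emeasure (t_a M \<alpha> a x) S) \<in> borel_measurable M"
    by (rule measurable_cong[THEN iffD1, rotated]) (simp add: emeasure_t_a S)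
qed

lemma tau_bind:
  assumes m: "m \<in> space (subprob_algebra M)"
  shows "tau M \<alpha> a m = bind m (t_a M \<alpha> a)"
proof -
  have sm: "sets m = sets M" using m by (simp add: space_subprob_algebra)
  have spm: "space m = space M" by (rule sets_eq_imp_space_eq[OF sm])
  have ne: "space m \<noteq> {}" using spm nonempty by simp
  have sb: "sets (bind m (t_a M \<alpha> a)) = sets M"
    by (rule sets_bind[OF _ ne]) (simp add: sets_t_a)
  have spb: "space (bind m (t_a M \<alpha> a)) = space M" by (rule sets_eq_imp_space_eq[OF sb])
  have "tau M \<alpha> a m = measure_of (space M) (sets M) (emeasure (bind m (t_a M \<alpha> a)))"
    unfolding tau_def
  proof (rule measure_of_eq)
    show "sets M \<subseteq> Pow (space M)" by (rule sets.space_closed)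
    fix S assume "S \<in> sigma_sets (space M) (sets M)"
    then have S: "S \<in> sets M" by (simp add: sets.sigma_sets_eq)
    have "emeasure (bind m (t_a M \<alpha> a)) S = (\<integral>\<^sup>+x. emeasure (t_a M \<alpha> a x) S \<partial>m)"
      by (rule emeasure_bind[OF ne _ S]) (simp add: t_a_meas measurable_cong_sets[OF sm refl])
    also have "\<dots> = (\<integral>\<^sup>+ x. emeasure (\<alpha> x) (Inl ` ({a} \<times> S)) \<partial>m)"
      by (rule nn_integral_cong) (simp add: emeasure_t_a S spm)
    finally show "(\<integral>\<^sup>+ x. emeasure (\<alpha> x) (Inl ` ({a} \<times> S)) \<partial>m) = emeasure (bind m (t_a M \<alpha> a)) S" by simp
  qed
  also have "\<dots> = bind m (t_a M \<alpha> a)"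
    using measure_of_of_measure[of "bind m (t_a M \<alpha> a)"] by (simp add: sb spb)
  finally show ?thesis .
qed

lemma tau_sub:
  assumes m: "m \<in> space (subprob_algebra M)"
  shows "tau M \<alpha> a m \<in> space (subprob_algebra M)"
proof -
  have sm: "sets m = sets M" using m by (simp add: space_subprob_algebra)
  have ne: "space m \<noteq> {}" using sets_eq_imp_space_eq[OF sm] nonempty by simp
  have "subprob_space (bind m (t_a M \<alpha> a))"
    using m t_a_meas by (intro subprob_space_bind) (auto simp: space_subprob_algebra measurable_cong_sets[OF sm refl])
  moreover have "sets (bind m (t_a M \<alpha> a)) = sets M"
    by (rule sets_bind[OF _ ne]) (simp add: sets_t_a)
  ultimately show ?thesis by (simp add: tau_bind[OF m] space_subprob_algebra)
qed

lemma sem_sub: "m \<in> space (subprob_algebra M) \<Longrightarrow> sem m \<in> space (subprob_algebra Ainf)"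
  using sem_morph unfolding is_coalg_morphism_def by (auto intro: measurable_space)

lemma sem_eqs:
  assumes m: "m \<in> space (subprob_algebra M)"
  shows "measure (sem m) (space Ainf) = (\<integral>x. measure (\<alpha> x) (space (L M)) \<partial>m)"
    and "measure (sem m) {eps} = (\<integral>x. measure (\<alpha> x) {Inr ()} \<partial>m)"
    and "derivm a (sem m) = sem (tau M \<alpha> a m)"
proof -
  have "Pi_coalg (sem m) = Fmap sem (alpha_sharp M \<alpha> m)"
    using sem_morph m unfolding is_coalg_morphism_def by blast
  then show "measure (sem m) (space Ainf) = (\<integral>x. measure (\<alpha> x) (space (L M)) \<partial>m)"
    and "measure (sem m) {eps} = (\<integral>x. measure (\<alpha> x) {Inr ()} \<partial>m)"
    and "derivm a (sem m) = sem (tau M \<alpha> a m)"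
    unfolding Pi_coalg_def Fmap_def alpha_sharp_def by (auto dest: fun_cong[of _ _ a])
qed

lemma emeasure_derivm:
  assumes m': "m' \<in> space (subprob_algebra Ainf)" and S: "S \<in> sets Ainf"
  shows "emeasure (derivm a m') S = emeasure m' (wcons a ` S)"
  unfolding derivm_def
  by (rule emeasure_measure_of_image[OF sets.sigma_algebra_axioms inj_wcons _ S])
     (use m' in \<open>auto simp: space_subprob_algebra wcons_sets\<close>)


definition "good S \<longleftrightarrow> S \<in> sets Ainf \<and> (\<lambda>x. emeasure (tr x) S) \<in> borel_measurable M \<and>
   (\<forall>m\<in>space (subprob_algebra M). emeasure (sem m) S = (\<integral>\<^sup>+x. emeasure (tr x) S \<partial>m))"

lemma good_step:
  assumes g: "good S"
    and rec: "\<And>x. x \<in> space M \<Longrightarrow> emeasure (tr x) (wcons a ` S) = (\<integral>\<^sup>+ y. emeasure (tr y) S \<partial>t_a M \<alpha> a x)"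
  shows "good (wcons a ` S)"
proof -
  have S: "S \<in> sets Ainf" and meas: "(\<lambda>x. emeasure (tr x) S) \<in> borel_measurable M"
    and IH: "\<And>m. m\<in>space (subprob_algebra M) \<Longrightarrow> emeasure (sem m) S = (\<integral>\<^sup>+x. emeasure (tr x) S \<partial>m)"
    using g unfolding good_def by auto
  have meas2: "(\<lambda>x. \<integral>\<^sup>+ y. emeasure (tr y) S \<partial>t_a M \<alpha> a x) \<in> borel_measurable M"
    by (rule measurable_compose[OF t_a_meas nn_integral_measurable_subprob_algebra[OF meas]])
  have "(\<lambda>x. emeasure (tr x) (wcons a ` S)) \<in> borel_measurable M"
    using meas2 by (rule measurable_cong[THEN iffD1, rotated]) (simp add: rec)
  moreover have "emeasure (sem m) (wcons a ` S) = (\<integral>\<^sup>+x. emeasure (tr x) (wcons a ` S) \<partial>m)"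
    if m: "m \<in> space (subprob_algebra M)" for m
  proof -
    have sm: "sets m = sets M" using m by (simp add: space_subprob_algebra)
    have spm: "space m = space M" by (rule sets_eq_imp_space_eq[OF sm])
    have "emeasure (sem m) (wcons a ` S) = emeasure (derivm a (sem m)) S"
      by (rule emeasure_derivm[OF sem_sub[OF m] S, symmetric])
    also have "\<dots> = emeasure (sem (tau M \<alpha> a m)) S" by (simp add: sem_eqs(3)[OF m])
    also have "\<dots> = (\<integral>\<^sup>+x. emeasure (tr x) S \<partial>tau M \<alpha> a m)" by (rule IH[OF tau_sub[OF m]])
    also have "\<dots> = (\<integral>\<^sup>+x. emeasure (tr x) S \<partial>bind m (t_a M \<alpha> a))" by (simp add: tau_bind[OF m])
    also have "\<dots> = (\<integral>\<^sup>+x. \<integral>\<^sup>+y. emeasure (tr y) S \<partial>t_a M \<alpha> a x \<partial>m)"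
      by (rule nn_integral_bind[OF meas]) (simp add: t_a_meas measurable_cong_sets[OF sm refl])
    also have "\<dots> = (\<integral>\<^sup>+x. emeasure (tr x) (wcons a ` S) \<partial>m)"
      by (rule nn_integral_cong) (simp add: rec spm)
    finally show ?thesis .
  qed
  ultimately show ?thesis unfolding good_def using wcons_sets[OF S] by blast
qed

lemma tr_x: "x \<in> space M \<Longrightarrow> prob_space (tr x) \<and> sets (tr x) = sets Ainf"
  using tr_prob by (auto simp: space_prob_algebra)

lemma good_UNIV: "good (cyl [])"
proof -
  have one: "emeasure (tr x) UNIV = 1" if x: "x \<in> space M" for x
  proof -
    interpret prob_space "\<alpha> x" using alpha_x[OF x] by simp
    have "space (\<alpha> x) = space (L M)" by (rule sets_eq_imp_space_eq[OF alpha_x[OF x, THEN conjunct2]])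
    then show ?thesis using tr_total[OF x] emeasure_space_1 by simp
  qed
  have "(\<lambda>x. emeasure (tr x) UNIV) \<in> borel_measurable M"
    by (rule measurable_cong[THEN iffD1, rotated, of "\<lambda>_. 1"]) (auto simp: one)
  moreover have "emeasure (sem m) UNIV = (\<integral>\<^sup>+x. emeasure (tr x) UNIV \<partial>m)"
    if m: "m \<in> space (subprob_algebra M)" for m
  proof -
    have sm: "sets m = sets M" using m by (simp add: space_subprob_algebra)
    have spm: "space m = space M" by (rule sets_eq_imp_space_eq[OF sm])
    interpret m: subprob_space m using m by (simp add: space_subprob_algebra)
    interpret s: subprob_space "sem m" using sem_sub[OF m] by (simp add: space_subprob_algebra)
    have "measure (sem m) UNIV = (\<integral>x. measure (\<alpha> x) (space (L M)) \<partial>m)" using sem_eqs(1)[OF m] by simp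
    also have "\<dots> = (\<integral>x. 1 \<partial>m)"
    proof (rule Bochner_Integration.integral_cong[OF refl])
      fix x assume "x \<in> space m"
      then have x: "x \<in> space M" by (simp add: spm)
      interpret prob_space "\<alpha> x" using alpha_x[OF x] by simp
      have "space (\<alpha> x) = space (L M)" by (rule sets_eq_imp_space_eq[OF alpha_x[OF x, THEN conjunct2]])
      then show "measure (\<alpha> x) (space (L M)) = 1" using prob_space by simp
    qed
    also have "\<dots> = measure m (space m)" by simp
    finally have e1: "measure (sem m) UNIV = measure m (space m)" .
    have "emeasure (sem m) UNIV = ennreal (measure (sem m) UNIV)" by (rule s.emeasure_eq_measure)
    also have "\<dots> = ennreal (measure m (space m))" by (simp only: e1)
    also have "\<dots> = emeasure m (space m)" by (rule m.emeasure_eq_measure[symmetric])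
    also have "\<dots> = (\<integral>\<^sup>+x. 1 \<partial>m)" by simp
    also have "\<dots> = (\<integral>\<^sup>+x. emeasure (tr x) UNIV \<partial>m)"
      by (rule nn_integral_cong) (simp add: one spm)
    finally show ?thesis .
  qed
  ultimately show ?thesis unfolding good_def cyl_Nil using sets.top[of Ainf] by simp
qed

lemma good_eps: "good {Inl []}"
proof -
  have eq: "emeasure (tr x) {Inl []} = emeasure (\<alpha> x) {Inr ()}" if "x \<in> space M" for x
    using tr_eps[OF that] by (simp add: eps_def)
  have "(\<lambda>x. emeasure (tr x) {Inl []}) \<in> borel_measurable M"
    using alpha_emeas[OF L_Inr_sets] by (rule measurable_cong[THEN iffD1, rotated]) (simp add: eq)
  moreover have "emeasure (sem m) {Inl []} = (\<integral>\<^sup>+x. emeasure (tr x) {Inl []} \<partial>m)"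
    if m: "m \<in> space (subprob_algebra M)" for m
  proof -
    have sm: "sets m = sets M" using m by (simp add: space_subprob_algebra)
    have spm: "space m = space M" by (rule sets_eq_imp_space_eq[OF sm])
    interpret m: subprob_space m using m by (simp add: space_subprob_algebra)
    interpret s: subprob_space "sem m" using sem_sub[OF m] by (simp add: space_subprob_algebra)
    have ae: "\<alpha> x \<in> space (prob_algebra (L M))" if "x \<in> space M" for x
      using measurable_space[OF alpha_meas that] .
    have int: "integrable m (\<lambda>x. measure (\<alpha> x) {Inr ()})"
    proof (rule m.integrable_const_bound[where B=1])
      show "AE x in m. norm (measure (\<alpha> x) {Inr ()}) \<le> 1"
      proof (rule AE_I2)
        fix x assume "x \<in> space m"
        then have x: "x \<in> space M" by (simp add: spm)
        interpret prob_space "\<alpha> x" using alpha_x[OF x] by simp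
        show "norm (measure (\<alpha> x) {Inr ()}) \<le> 1" by simp
      qed
      show "(\<lambda>x. measure (\<alpha> x) {Inr ()}) \<in> borel_measurable m"
        using alpha_meas_real[OF L_Inr_sets] by (simp add: measurable_cong_sets[OF sm refl])
    qed
    have "emeasure (sem m) {Inl []} = ennreal (measure (sem m) {eps})"
      by (simp add: s.emeasure_eq_measure eps_def)
    also have "\<dots> = ennreal (\<integral>x. measure (\<alpha> x) {Inr ()} \<partial>m)" using sem_eqs(2)[OF m] by simp
    also have "\<dots> = (\<integral>\<^sup>+x. ennreal (measure (\<alpha> x) {Inr ()}) \<partial>m)"
      by (rule nn_integral_eq_integral[OF int, symmetric]) simp
    also have "\<dots> = (\<integral>\<^sup>+x. emeasure (tr x) {Inl []} \<partial>m)"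
    proof (rule nn_integral_cong)
      fix x assume "x \<in> space m"
      then have x: "x \<in> space M" by (simp add: spm)
      interpret prob_space "\<alpha> x" using alpha_x[OF x] by simp
      show "ennreal (measure (\<alpha> x) {Inr ()}) = emeasure (tr x) {Inl []}"
        by (simp add: eq[OF x] emeasure_eq_measure)
    qed
    finally show ?thesis .
  qed
  ultimately show ?thesis unfolding good_def by simp
qed

lemma good_all: "good (cyl w) \<and> good {Inl w}"
proof (induction w)
  case Nil then show ?case using good_UNIV good_eps by simp
next
  case (Cons a w)
  have "good (wcons a ` cyl w)"
    by (rule good_step[OF Cons[THEN conjunct1]]) (simp add: wcons_cyl tr_cyl)
  moreover have "good (wcons a ` {Inl w})"
    by (rule good_step[OF Cons[THEN conjunct2]]) (simp add: wcons_def tr_fin)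
  ultimately show ?case by (simp only: wcons_cyl wcons_sing)
qed

lemma final: "x \<in> space M \<Longrightarrow> sem (return M x) = tr x"
proof -
  assume x: "x \<in> space M"
  have r: "return M x \<in> space (subprob_algebra M)"
    using x by (simp add: space_subprob_algebra subprob_space_return)
  interpret s: subprob_space "sem (return M x)" using sem_sub[OF r] by (simp add: space_subprob_algebra)
  have ev: "emeasure (sem (return M x)) X = emeasure (tr x) X" if "good X" for X
  proof -
    have "emeasure (sem (return M x)) X = (\<integral>\<^sup>+y. emeasure (tr y) X \<partial>return M x)"
      using that r unfolding good_def by blast
    also have "\<dots> = emeasure (tr x) X"
      using that x unfolding good_def by (intro nn_integral_return) auto
    finally show ?thesis .
  qed
  show ?thesis
  proof (rule measure_eqI_generator_eq[OF Int_stable_E, where \<Omega>=UNIV and A="\<lambda>_. cyl []"])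
    show "GenE \<subseteq> Pow UNIV" by simp
    fix X :: "'a word set" assume "X \<in> GenE"
    then consider "X = {}" | u where "X = {Inl u}" | w where "X = cyl w" unfolding GenE_iff by blast
    then show "emeasure (sem (return M x)) X = emeasure (tr x) X"
    proof cases
      case 1 then show ?thesis by simp
    next
      case (2 u) then show ?thesis using ev good_all by simp
    next
      case (3 w) then show ?thesis using ev good_all by simp
    qed
  next
    show "sets (sem (return M x)) = sigma_sets UNIV GenE"
      using sem_sub[OF r] by (simp add: space_subprob_algebra sets_Ainf)
    show "sets (tr x) = sigma_sets UNIV GenE" using tr_x[OF x] by (simp add: sets_Ainf)
    show "range (\<lambda>_. cyl []) \<subseteq> GenE" by auto
    show "(\<Union>i. cyl []) = UNIV" by (simp add: cyl_Nil)
    show "emeasure (sem (return M x)) (cyl []) \<noteq> \<infinity>" by simp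
  qed
qed

end

theorem mainTheorem13:
  fixes M :: "'x measure"
    and \<alpha> :: "'x \<Rightarrow> ('a::finite \<times> 'x + unit) measure"
    and sem :: "'x measure \<Rightarrow> 'a word measure"
    and tr :: "'x \<Rightarrow> 'a word measure"
  assumes alpha_meas: "\<alpha> \<in> measurable M (prob_algebra (L M))"
    and sem_morph: "is_coalg_morphism M \<alpha> sem"
    and tr_prob: "\<And>x. x \<in> space M \<Longrightarrow> tr x \<in> space (prob_algebra Ainf)"
    and tr_total: "\<And>x. x \<in> space M \<Longrightarrow> emeasure (tr x) (space Ainf) = emeasure (\<alpha> x) (space (L M))"
    and tr_eps: "\<And>x. x \<in> space M \<Longrightarrow> emeasure (tr x) {eps} = emeasure (\<alpha> x) {Inr ()}"
    and tr_cyl: "\<And>x a w. x \<in> space M \<Longrightarrow>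
       emeasure (tr x) (cyl (a # w)) = (\<integral>\<^sup>+ y. emeasure (tr y) (cyl w) \<partial>(t_a M \<alpha> a x))"
    and tr_fin: "\<And>x a w. x \<in> space M \<Longrightarrow>
       emeasure (tr x) {Inl (a # w)} = (\<integral>\<^sup>+ y. emeasure (tr y) {Inl w} \<partial>(t_a M \<alpha> a x))"
  shows "\<forall>x \<in> space M. sem (return M x) = tr x"
proof (cases "space M = {}")
  case True then show ?thesis by simp
next
  case False
  show ?thesis using final[OF alpha_meas sem_morph tr_prob tr_total tr_eps tr_cyl tr_fin False] by blast
qed

end
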